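(* (Computing the weighted, repeated argument sum.) For complex numbers $x_0,\dots,x_q$ (repetitions allowed) and $\tau\in\mathbb{R}$, $$\sum_{j=0}^q x_j\,e^{-\tau[x_0,\ldots,x_q,x_j]}=\begin{cases}(-x_0\tau-q)\,e^{-\tau[x_0,\ldots,x_q]}-\tau\,e^{-\tau[x_1,\ldots,x_q]}, & q>0,\\ -\tau x_0e^{-\tau x_0}, & q=0.\end{cases}$$
   Context: For $t\in\mathbb{R}$ and numbers $y_0,\dots,y_p$ (repetitions allowed), $e^{t[y_0,\ldots,y_p]}$ denotes the divided difference of $f(x)=e^{tx}$, $f[y_0,\ldots,y_p]=\frac{1}{2\pi i}\oint_\Gamma\frac{f(x)}{\prod_{i=0}^p(x-y_i)}\,\mathrm{d}x$, $\Gamma$ a positively oriented contour enclosing all $y_i$. The multiset $[x_0,\ldots,x_q,x_j]$ contains $x_j$ twice. *)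

theory Defs
  imports "HOL-Complex_Analysis.Complex_Analysis"
begin

text \<open>Divided difference of f(x) = e^{t x} at the nodes ys (a list, repetitions allowed),
  defined by the contour integral (1/(2 pi i)) \<oint> f(x) / prod (x - y_i) dx over a positively
  oriented circle centred at 0 whose radius exceeds every |y_i| (so it encloses all nodes).\<close>
definition exp_dd :: "real \<Rightarrow> complex list \<Rightarrow> complex" where
  "exp_dd t ys =
     contour_integral (circlepath 0 (1 + sum_list (map norm ys)))
       (\<lambda>z. exp (complex_of_real t * z) / prod_list (map (\<lambda>y. z - y) ys))
     / (2 * complex_of_real pi * \<i>)"

end

theory Submission imports Defs begin

definition ddF :: "real \<Rightarrow> complex list \<Rightarrow> complex \<Rightarrow> complex" where
  "ddF t ys z = exp (complex_of_real t * z) / prod_list (map (\<lambda>y. z - y) ys)"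

lemma prodP_holo: "(\<lambda>z. prod_list (map (\<lambda>y. z - y) ys)) holomorphic_on A"
  by (induction ys) (auto intro!: holomorphic_intros)

lemma prodP_nz: "(z::complex) \<notin> set ys \<Longrightarrow> prod_list (map (\<lambda>y. z - y) ys) \<noteq> 0"
  by (induction ys) auto

lemma ddF_holo: "ddF t ys holomorphic_on (- set ys)"
  unfolding ddF_def
  by (intro holomorphic_intros prodP_holo) (auto simp: prodP_nz)

lemma ddF_int:
  assumes "0 < r" "\<forall>y\<in>set ys. norm y < r"
  shows "ddF t ys contour_integrable_on circlepath 0 r"
proof (rule contour_integrable_holomorphic_simple[OF ddF_holo])
  show "open (- set ys)" by (intro open_Compl finite_imp_closed) simp
  show "valid_path (circlepath 0 r)" by simp
  show "path_image (circlepath 0 r) \<subseteq> - set ys"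
    using assms by (auto simp: path_image_circlepath_nonneg)
qed

lemma ddF_res:
  assumes "0 < r" "\<forall>y\<in>set ys. norm y < r"
  shows "contour_integral (circlepath 0 r) (ddF t ys) = 2*pi*\<i> * (\<Sum>p\<in>set ys. residue (ddF t ys) p)"
proof -
  have "contour_integral (circlepath 0 r) (ddF t ys) = 2*pi*\<i> * (\<Sum>p\<in>set ys. winding_number (circlepath 0 r) p * residue (ddF t ys) p)"
  proof (rule Residue_theorem[where S=UNIV])
    show "ddF t ys holomorphic_on UNIV - set ys" using ddF_holo by (simp add: Compl_eq_Diff_UNIV)
    show "path_image (circlepath 0 r) \<subseteq> UNIV - set ys"
      using assms by (auto simp: path_image_circlepath_nonneg)
  qed auto
  also have "\<dots> = 2*pi*\<i> * (\<Sum>p\<in>set ys. residue (ddF t ys) p)"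
    using assms by (intro arg_cong2[where f="(*)"] refl sum.cong) (auto simp: winding_number_circlepath)
  finally show ?thesis .
qed

lemma exp_dd_r:
  assumes "0 < r" "\<forall>y\<in>set ys. norm y < r"
  shows "exp_dd t ys = contour_integral (circlepath 0 r) (ddF t ys) / (2*pi*\<i>)"
proof -
  have "\<forall>y\<in>set ys. norm y < 1 + sum_list (map norm ys)"
    using member_le_sum_list[of _ "map norm ys"] by force
  moreover have "0 < 1 + sum_list (map norm ys)"
    by (smt (verit) norm_ge_zero sum_list_nonneg ex_map_conv)
  ultimately show ?thesis
    unfolding exp_dd_def using ddF_res[OF assms, of t] ddF_res[of "1 + sum_list (map norm ys)" ys t]
    by (simp add: ddF_def[abs_def])
qed

lemma alg1:
  fixes z a P S :: complex
  assumes "z - a \<noteq> 0" "P \<noteq> 0"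
  shows "- 1 / (z-a)^2 * (1 / P) + (- S / P) * (1/(z-a)) = - (1/(z-a) + S) / ((z-a) * P)"
proof -
  define d where "d = z - a"
  have "d \<noteq> 0" using assms d_def by simp
  then show ?thesis unfolding d_def[symmetric] using assms(2)
    by (simp add: field_simps power2_eq_square)
qed

lemma deriv_h:
  fixes z :: complex
  shows "z \<notin> set ys \<Longrightarrow> ((\<lambda>w. 1 / prod_list (map (\<lambda>y. w-y) ys)) has_field_derivative
     (- sum_list (map (\<lambda>y. 1/(z-y)) ys) / prod_list (map (\<lambda>y. z-y) ys))) (at z)"
proof (induction ys)
  case Nil
  then show ?case by simp
next
  case (Cons a ys)
  have za: "z - a \<noteq> 0" using Cons by auto
  have nz: "prod_list (map (\<lambda>y. z-y) ys) \<noteq> 0" using Cons prodP_nz by auto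
  have d1: "((\<lambda>w. 1 / (w - a)) has_field_derivative (- 1 / (z-a)^2)) (at z)"
    using za by (auto intro!: derivative_eq_intros simp: power2_eq_square)
  have "((\<lambda>w. 1 / (w - a) * (1 / prod_list (map (\<lambda>y. w-y) ys))) has_field_derivative
     (- 1 / (z-a)^2 * (1 / prod_list (map (\<lambda>y. z-y) ys)) + (- sum_list (map (\<lambda>y. 1/(z-y)) ys) / prod_list (map (\<lambda>y. z-y) ys)) * (1/(z-a)))) (at z)"
    using Cons by (intro DERIV_mult d1) auto
  moreover have "(\<lambda>w. 1 / (w - a) * (1 / prod_list (map (\<lambda>y. w-y) ys))) = (\<lambda>w. 1 / prod_list (map (\<lambda>y. w-y) (a#ys)))"
    by auto
  moreover have "- 1 / (z-a)^2 * (1 / prod_list (map (\<lambda>y. z-y) ys)) + (- sum_list (map (\<lambda>y. 1/(z-y)) ys) / prod_list (map (\<lambda>y. z-y) ys)) * (1/(z-a))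
     = - sum_list (map (\<lambda>y. 1/(z-y)) (a#ys)) / prod_list (map (\<lambda>y. z-y) (a#ys))"
    using alg1[OF za nz] by simp
  ultimately show ?case by simp
qed

lemma alg2:
  fixes E z u V S T Q :: complex
  assumes "z - u \<noteq> 0" "V \<noteq> 0"
  shows "E / ((z - u) * V) * (z * S - (Q + 1)) =
    (- u * T - Q) * (E / ((z - u) * V)) - T * (E / V) -
    ((- T * E) * z * (1 / ((z - u) * V)) + E * (1 / ((z - u) * V)) + E * z * (- S / ((z - u) * V)))"
proof -
  define d where "d = z - u"
  have z: "z = d + u" using d_def by simp
  have "d \<noteq> 0" using assms d_def by simp
  then show ?thesis unfolding z using assms(2)
    by (simp add: field_simps)
qed

theorem corollary1:
  fixes x :: "nat \<Rightarrow> complex" and q :: nat and \<tau> :: real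
  shows "(\<Sum>j\<le>q. x j * exp_dd (- \<tau>) (map x [0..<q+1] @ [x j])) =
         (if q > 0
          then (- x 0 * complex_of_real \<tau> - of_nat q) * exp_dd (- \<tau>) (map x [0..<q+1])
               - complex_of_real \<tau> * exp_dd (- \<tau>) (map x [1..<q+1])
          else - complex_of_real \<tau> * x 0 * exp (- complex_of_real \<tau> * x 0))"
proof -
  define ys where "ys = map x [0..<q+1]"
  define ys1 where "ys1 = map x [1..<q+1]"
  define R where "R = 1 + (\<Sum>i\<le>q. norm (x i))"
  define T where "T = complex_of_real \<tau>"
  define C where "C = circlepath 0 R"
  have Rpos: "0 < R" unfolding R_def by (smt (verit) sum_nonneg norm_ge_zero)
  have xR: "norm (x i) < R" if "i \<le> q" for i
  proof -
    have "norm (x i) \<le> (\<Sum>i\<le>q. norm (x i))"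
      using that by (intro member_le_sum) auto
    then show ?thesis unfolding R_def by simp
  qed
  have ys_ok: "\<forall>y\<in>set ys. norm y < R" unfolding ys_def using xR by auto
  have ys1_ok: "\<forall>y\<in>set ys1. norm y < R" unfolding ys1_def using xR by auto
  have ysj_ok: "\<forall>y\<in>set (ys @ [x j]). norm y < R" if "j \<le> q" for j
    using ys_ok xR that by auto
  define I where "I zs = contour_integral C (ddF (- \<tau>) zs)" for zs
  have hI: "(ddF (- \<tau>) zs has_contour_integral I zs) C" if "\<forall>y\<in>set zs. norm y < R" for zs
    unfolding I_def C_def using ddF_int[OF Rpos that] by (rule has_contour_integral_integral)
  have ed: "exp_dd (- \<tau>) zs = I zs / (2*pi*\<i>)" if "\<forall>y\<in>set zs. norm y < R" for zs
    unfolding I_def C_def using exp_dd_r[OF Rpos that] .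
  define P where "P z = prod_list (map (\<lambda>y. z - y) ys)" for z
  define S where "S z = sum_list (map (\<lambda>y. 1 / (z - y)) ys)" for z
  define g where "g z = exp (- T * z) * z * (1 / P z)" for z
  define g' where "g' z = (- T * exp (- T * z)) * z * (1 / P z) + exp (- T * z) * (1 / P z) + exp (- T * z) * z * (- S z / P z)" for z
  have pathC: "path_image C \<subseteq> - set ys"
    unfolding C_def using ys_ok Rpos by (auto simp: path_image_circlepath_nonneg)
  have hg: "(g has_field_derivative g' z) (at z within - set ys)" if "z \<in> - set ys" for z
  proof -
    have e: "((\<lambda>w. exp (- T * w)) has_field_derivative (- T * exp (- T * z))) (at z)"
      by (auto intro!: derivative_eq_intros)
    have h: "((\<lambda>w. 1 / P w) has_field_derivative (- S z / P z)) (at z)"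
      using deriv_h[of z ys] that unfolding P_def S_def by simp
    have "((\<lambda>w. exp (- T * w) * w * (1 / P w)) has_field_derivative
       ((- T * exp (- T * z)) * z + 1 * exp (- T * z)) * (1 / P z) + (- S z / P z) * (exp (- T * z) * z)) (at z)"
      by (intro DERIV_mult e h DERIV_ident)
    moreover have "((- T * exp (- T * z)) * z + 1 * exp (- T * z)) * (1 / P z) + (- S z / P z) * (exp (- T * z) * z) = g' z"
      unfolding g'_def by (simp add: algebra_simps)
    ultimately have "(g has_field_derivative g' z) (at z)" unfolding g_def by simp
    then show ?thesis by (rule has_field_derivative_at_within)
  qed
  have hg': "(g' has_contour_integral 0) C"
    using contour_integral_primitive[OF hg _ pathC] unfolding C_def by simp
  have comb: "((\<lambda>z. (- x 0 * T - of_nat q) * ddF (- \<tau>) ys z - T * ddF (- \<tau>) ys1 z - g' z) has_contour_integral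
      ((- x 0 * T - of_nat q) * I ys - T * I ys1 - 0)) C"
    by (intro has_contour_integral_diff has_contour_integral_lmul hI hg' ys_ok ys1_ok)
  have pw: "(\<Sum>j\<le>q. x j * ddF (- \<tau>) (ys @ [x j]) z) =
      (- x 0 * T - of_nat q) * ddF (- \<tau>) ys z - T * ddF (- \<tau>) ys1 z - g' z"
    if "z \<in> path_image C" for z
  proof -
    have zn: "z \<notin> set ys" using pathC that by auto
    have znj: "z - x j \<noteq> 0" if "j \<le> q" for j
    proof -
      have "j \<in> set [0..<q+1]" using that by (simp del: upt_Suc)
      then have "x j \<in> set ys" unfolding ys_def set_map by (rule imageI)
      then show ?thesis using zn by auto
    qed
    define E where "E = exp (- T * z)"
    define P1 where "P1 = prod_list (map (\<lambda>y. z - y) ys1)"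
    have P1nz: "P1 \<noteq> 0" unfolding P1_def
      by (rule prodP_nz) (use zn in \<open>auto simp: ys_def ys1_def\<close>)
    have ysC: "ys = x 0 # ys1" unfolding ys_def ys1_def by (simp del: upt_Suc add: upt_conv_Cons)
    have PP: "P z = (z - x 0) * P1" unfolding P_def P1_def ysC by simp
    have SS: "S z = (\<Sum>j\<le>q. 1 / (z - x j))"
      unfolding S_def ys_def by (simp del: upt_Suc add: interv_sum_list_conv_sum_set_nat atLeast0_lessThan_Suc atLeastLessThanSuc_atLeastAtMost atLeast0AtMost)
    have "(\<Sum>j\<le>q. x j * ddF (- \<tau>) (ys @ [x j]) z) = (\<Sum>j\<le>q. E / P z * (x j / (z - x j)))"
      by (intro sum.cong) (auto simp: ddF_def E_def T_def P_def)
    also have "\<dots> = E / P z * (\<Sum>j\<le>q. (z * (1 / (z - x j)) - 1))"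
      by (subst sum_distrib_left[symmetric], intro arg_cong2[where f="(*)"] refl sum.cong)
         (use znj in \<open>auto simp: field_simps\<close>)
    also have "\<dots> = E / P z * (z * S z - (of_nat q + 1))"
      by (simp add: SS sum_subtractf sum_distrib_left)
    also have "\<dots> = (- x 0 * T - of_nat q) * ddF (- \<tau>) ys z - T * ddF (- \<tau>) ys1 z - g' z"
    proof -
      have "ddF (- \<tau>) ys z = E / ((z - x 0) * P1)"
        using PP unfolding ddF_def E_def T_def P_def by simp
      moreover have "ddF (- \<tau>) ys1 z = E / P1"
        unfolding ddF_def E_def T_def P1_def by simp
      moreover have "g' z = (- T * E) * z * (1 / ((z - x 0) * P1)) + E * (1 / ((z - x 0) * P1)) + E * z * (- S z / ((z - x 0) * P1))"
        unfolding g'_def E_def PP ..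
      ultimately show ?thesis
        using alg2[where E=E and z=z and u="x 0" and V=P1 and S="S z" and T=T and Q="of_nat q"] znj[of 0] P1nz PP
        by simp
    qed
    finally show ?thesis .
  qed
  have sumI: "((\<lambda>z. \<Sum>j\<le>q. x j * ddF (- \<tau>) (ys @ [x j]) z) has_contour_integral
      (\<Sum>j\<le>q. x j * I (ys @ [x j]))) C"
    by (intro has_contour_integral_sum has_contour_integral_lmul hI ysj_ok) auto
  have key: "(\<Sum>j\<le>q. x j * I (ys @ [x j])) = (- x 0 * T - of_nat q) * I ys - T * I ys1"
    using has_contour_integral_unique[OF sumI has_contour_integral_eq[OF comb]] pw by auto
  have lhs: "(\<Sum>j\<le>q. x j * exp_dd (- \<tau>) (ys @ [x j])) = (\<Sum>j\<le>q. x j * I (ys @ [x j])) / (2*pi*\<i>)"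
    unfolding sum_divide_distrib by (intro sum.cong refl) (simp add: ed ysj_ok)
  show ?thesis
  proof (cases "q > 0")
    case True
    then show ?thesis
      unfolding ys_def[symmetric] ys1_def[symmetric] lhs key
      by (simp add: ed ys_ok ys1_ok T_def diff_divide_distrib)
  next
    case False
    then have q0: "q = 0" by simp
    have ys0: "ys = [x 0]" unfolding ys_def q0 by simp
    have ys10: "ys1 = []" unfolding ys1_def q0 by simp
    have I0: "I ys1 = 0" unfolding ys10 I_def C_def using ddF_res[OF Rpos, of "[]"] by simp
    have "((\<lambda>u. exp (- T * u) / (u - x 0)) has_contour_integral (2 * of_real pi * \<i> * exp (- T * x 0))) (circlepath 0 R)"
      by (rule Cauchy_integral_circlepath_simple) (use xR[of 0] in \<open>auto intro!: holomorphic_intros\<close>)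
    then have "I ys = 2 * of_real pi * \<i> * exp (- T * x 0)"
      unfolding I_def C_def ys0 ddF_def T_def by (intro contour_integral_unique) simp
    then show ?thesis
      unfolding ys_def[symmetric] ys1_def[symmetric] lhs key I0 using False
      by (simp add: T_def) (simp add: algebra_simps)
  qed
qed

end
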